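(* Let $f:\mathbb{R}^d\to\mathbb{R}$ and $P:\mathbb{R}^d\to\mathbb{R}^s$ be continuously differentiable, $D\subseteq\mathbb{R}^s$ closed, $\Omega=\{z\mid P(z)\in D\}$, and let $\bar z\in\Omega$ be B-stationary for the problem $\min f(z)$ s.t. $P(z)\in D$. Assume that GGCQ holds at $\bar z$ and that the mapping $u\rightrightarrows\nabla P(\bar z)u-T_D(P(\bar z))$ is metrically subregular at $(0,0)$. Then one of the following two conditions is fulfilled: (1) There exist $w\in T_D(P(\bar z))$ and $w^\ast\in\widehat N_{T_D(P(\bar z))}(w)$ such that $\nabla f(\bar z)+\nabla P(\bar z)^\ast w^\ast=0$. (2) There exists $\bar u\in T^{\rm lin}_{P,D}(\bar z)$ such that $\nabla P(\bar z)\bar u\notin\operatorname{Lsp}(T_D(P(\bar z)))$, $\langle\nabla f(\bar z),\bar u\rangle=0$, $0\in\nabla f(\bar z)+\widehat N_{T^{\rm lin}_{P,D}(\bar z)}(\bar u)$, and $T_D(P(\bar z))$ is not locally polyhedral near $\nabla P(\bar z)\bar u$.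
   Context: Tangent cone: $T_\Omega(\bar z)=\{w\mid \exists t_k\downarrow0,\ w_k\to w,\ \bar z+t_kw_k\in\Omega\}$ (empty if $\bar z\notin\Omega$). Polar cone $K^\ast=\{z^\ast\mid\langle z^\ast,w\rangle\le0\ \forall w\in K\}$; regular normal cone $\widehat N_\Omega(\bar z)=(T_\Omega(\bar z))^\ast$ (empty if $\bar z\notin\Omega$). Linearized tangent cone: $T^{\rm lin}_{P,D}(\bar z)=\{u\mid\nabla P(\bar z)u\in T_D(P(\bar z))\}$. $\bar z$ is B-stationary if $0\in\nabla f(\bar z)+\widehat N_\Omega(\bar z)$. GGCQ holds at $\bar z$ if $\widehat N_\Omega(\bar z)=(T^{\rm lin}_{P,D}(\bar z))^\ast$. A mapping $M$ is metrically subregular at $(\bar z,\bar w)\in\operatorname{gph}M$ if there are a neighborhood $W$ of $\bar z$ and $\kappa>0$ with $\operatorname{dist}(z,M^{-1}(\bar w))\le\kappa\operatorname{dist}(\bar w,M(z))$ for all $z\in W$. For a cone $C$, $\operatorname{Lsp}(C)$ is the largest linear subspace $L$ with $C+L\subseteq C$. A set is polyhedral if it is a finite union of sets of the form $\{z\mid\langle a_i,z\rangle\le\alpha_i,\ i=1,\dots,p\}$; a set $\Omega$ is locally polyhedral near $\bar z\in\Omega$ if there are a neighborhood $W$ of $\bar z$ and a polyhedral set $C$ with $\Omega\cap W=C\cap W$. *)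

theory Defs
  imports "HOL-Analysis.Analysis"
begin

definition tangent_cone :: "('a::real_normed_vector) set \<Rightarrow> 'a \<Rightarrow> 'a set" where
  "tangent_cone \<Omega> z = {w. z \<in> \<Omega> \<and> (\<exists>t wk. (\<forall>k. t k > 0) \<and> t \<longlonglongrightarrow> 0 \<and>
       wk \<longlonglongrightarrow> w \<and> (\<forall>k. z + t k *\<^sub>R wk k \<in> \<Omega>))}"

definition polar_cone :: "('a::real_inner) set \<Rightarrow> 'a set" where
  "polar_cone K = {y. \<forall>w\<in>K. inner y w \<le> 0}"

definition regular_normal_cone :: "('a::real_inner) set \<Rightarrow> 'a \<Rightarrow> 'a set" where
  "regular_normal_cone \<Omega> z = (if z \<in> \<Omega> then polar_cone (tangent_cone \<Omega> z) else {})"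

text \<open>Linearized tangent cone; the Jacobian of P at z is given as the matrix JP z.\<close>
definition lin_tangent_cone ::
  "(real^'d \<Rightarrow> real^'d^'s) \<Rightarrow> (real^'d \<Rightarrow> real^'s) \<Rightarrow> (real^'s) set \<Rightarrow> real^'d \<Rightarrow> (real^'d) set" where
  "lin_tangent_cone JP P D z = {u. JP z *v u \<in> tangent_cone D (P z)}"

definition graph_of :: "('a \<Rightarrow> 'b set) \<Rightarrow> ('a \<times> 'b) set" where
  "graph_of M = {(x, y). y \<in> M x}"

definition inverse_image_mv :: "('a \<Rightarrow> 'b set) \<Rightarrow> 'b \<Rightarrow> 'a set" where
  "inverse_image_mv M w = {x. w \<in> M x}"

text \<open>Metric subregularity. The distance to the empty set is +infinity, so the
  inequality is only required where M x is nonempty.\<close>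
definition metrically_subregular ::
  "('a::metric_space \<Rightarrow> ('b::metric_space) set) \<Rightarrow> 'a \<Rightarrow> 'b \<Rightarrow> bool" where
  "metrically_subregular M z w \<longleftrightarrow> (z, w) \<in> graph_of M \<and>
     (\<exists>W \<kappa>. open W \<and> z \<in> W \<and> \<kappa> > 0 \<and>
        (\<forall>x\<in>W. M x \<noteq> {} \<longrightarrow> infdist x (inverse_image_mv M w) \<le> \<kappa> * infdist w (M x)))"

definition Lsp :: "('a::real_vector) set \<Rightarrow> 'a set" where
  "Lsp C = (THE L. subspace L \<and> {c + l | c l. c \<in> C \<and> l \<in> L} \<subseteq> C \<and>
     (\<forall>L'. subspace L' \<and> {c + l | c l. c \<in> C \<and> l \<in> L'} \<subseteq> C \<longrightarrow> L' \<subseteq> L))"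

definition polyhedral_set :: "('a::real_inner) set \<Rightarrow> bool" where
  "polyhedral_set S \<longleftrightarrow> (\<exists>F. finite F \<and> S = \<Union>F \<and>
     (\<forall>Q\<in>F. \<exists>(p::nat) a \<alpha>. Q = {z. \<forall>i<p. inner (a i) z \<le> \<alpha> i}))"

definition locally_polyhedral :: "('a::real_inner) set \<Rightarrow> 'a \<Rightarrow> bool" where
  "locally_polyhedral \<Omega> z \<longleftrightarrow> z \<in> \<Omega> \<and>
     (\<exists>W C. open W \<and> z \<in> W \<and> polyhedral_set C \<and> \<Omega> \<inter> W = C \<inter> W)"

end

theory Submission
  imports Defs
begin
lemma lim_inv_succ: "(\<lambda>k. 1 / (real k + 1)) \<longlonglongrightarrow> 0"
  using LIMSEQ_inverse_real_of_nat_add[of 0] by (simp add: inverse_eq_divide add.commute)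

lemma sandwich0:
  fixes x :: "nat \<Rightarrow> real"
  assumes a1: "\<And>k. 0 \<le> x k" and a2: "\<And>k. x k \<le> 1 / (real k + 1)"
  shows "x \<longlonglongrightarrow> 0"
proof (rule tendsto_sandwich[where f="\<lambda>k. 0" and h="\<lambda>k. 1 / (real k + 1)"])
  show "\<forall>\<^sub>F n in sequentially. 0 \<le> x n" using a1 by (simp add: always_eventually)
  show "\<forall>\<^sub>F n in sequentially. x n \<le> 1 / (real n + 1)" using a2 by (simp add: always_eventually)
  show "(\<lambda>k. 0) \<longlonglongrightarrow> 0" by simp
  show "(\<lambda>k. 1 / (real k + 1)) \<longlonglongrightarrow> 0" by (rule lim_inv_succ)
qed

lemma tangent_cone_eps:
  assumes "z \<in> S" "\<And>e. e > 0 \<Longrightarrow> \<exists>t v. 0 < t \<and> t < e \<and> dist v w < e \<and> z + t *\<^sub>R v \<in> S"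
  shows "w \<in> tangent_cone S z"
proof -
  define P where "P = (\<lambda>k tv. 0 < fst tv \<and> fst tv < 1 / (real k + 1) \<and> dist (snd tv) w < 1 / (real k + 1) \<and> z + fst tv *\<^sub>R snd tv \<in> S)"
  have ex: "\<exists>tv. P k tv" for k
  proof -
    have "1 / (real k + 1) > 0" by simp
    from assms(2)[OF this] obtain t v where tv: "0 < t" "t < 1 / (real k + 1)" "dist v w < 1 / (real k + 1)" "z + t *\<^sub>R v \<in> S"
      by blast
    have "P k (t, v)" unfolding P_def using tv by simp
    then show ?thesis by blast
  qed
  define tv where "tv = (\<lambda>k. SOME x. P k x)"
  have Ptv: "P k (tv k)" for k unfolding tv_def using ex[of k] by (rule someI_ex)
  have tv1: "0 < fst (tv k)" and tv2: "fst (tv k) < 1 / (real k + 1)"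
    and tv3: "dist (snd (tv k)) w < 1 / (real k + 1)" and tv4: "z + fst (tv k) *\<^sub>R snd (tv k) \<in> S" for k
    using Ptv[of k] unfolding P_def by simp_all
  have l1: "(\<lambda>k. fst (tv k)) \<longlonglongrightarrow> 0"
  proof (rule sandwich0)
    fix k show "0 \<le> fst (tv k)" using tv1[of k] by linarith
    show "fst (tv k) \<le> 1 / (real k + 1)" using tv2[of k] by linarith
  qed
  have "(\<lambda>k. dist (snd (tv k)) w) \<longlonglongrightarrow> 0"
  proof (rule sandwich0)
    fix k show "0 \<le> dist (snd (tv k)) w" by simp
    show "dist (snd (tv k)) w \<le> 1 / (real k + 1)" using tv3[of k] by linarith
  qed
  then have l2: "(\<lambda>k. snd (tv k)) \<longlonglongrightarrow> w" by (rule iffD2[OF tendsto_dist_iff])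
  have "\<exists>t wk. (\<forall>k. t k > 0) \<and> t \<longlonglongrightarrow> 0 \<and> wk \<longlonglongrightarrow> w \<and> (\<forall>k. z + t k *\<^sub>R wk k \<in> S)"
  proof (intro exI conjI)
    show "\<forall>k. fst (tv k) > 0" using tv1 by simp
    show "(\<lambda>k. fst (tv k)) \<longlonglongrightarrow> 0" by (rule l1)
    show "(\<lambda>k. snd (tv k)) \<longlonglongrightarrow> w" by (rule l2)
    show "\<forall>k. z + fst (tv k) *\<^sub>R snd (tv k) \<in> S" using tv4 by simp
  qed
  then show ?thesis unfolding tangent_cone_def using assms(1) by blast
qed


lemma tangent_cone_zero:
  assumes "z \<in> S" shows "0 \<in> tangent_cone S z"
proof -
  have "(\<lambda>k. 1 / (real k + 1)) \<longlonglongrightarrow> 0"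
    using LIMSEQ_inverse_real_of_nat_add[of 0] by (simp add: inverse_eq_divide add.commute)
  then show ?thesis unfolding tangent_cone_def using assms
    by (intro CollectI conjI exI[of _ "\<lambda>k. 1 / (real k + 1)"] exI[of _ "\<lambda>k. 0"]) auto
qed

lemma tangent_cone_scale:
  assumes "w \<in> tangent_cone S z" "0 \<le> c" shows "c *\<^sub>R w \<in> tangent_cone S z"
proof (cases "c = 0")
  case True
  have "z \<in> S" using assms(1) by (simp add: tangent_cone_def)
  then show ?thesis using True tangent_cone_zero by simp
next
  case False
  then have cp: "c > 0" using assms by auto
  from assms obtain t wk where t: "\<forall>k. t k > 0" "t \<longlonglongrightarrow> 0" "wk \<longlonglongrightarrow> w" "\<forall>k. z + t k *\<^sub>R wk k \<in> S" "z \<in> S"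
    unfolding tangent_cone_def by auto
  have l1: "(\<lambda>k. t k / c) \<longlonglongrightarrow> 0" using tendsto_divide[OF t(2) tendsto_const, of c] cp by simp
  have l2: "(\<lambda>k. c *\<^sub>R wk k) \<longlonglongrightarrow> c *\<^sub>R w" using t(3) by (intro tendsto_scaleR) auto
  have l3: "\<forall>k. z + (t k / c) *\<^sub>R (c *\<^sub>R wk k) \<in> S" using t(4) cp by simp
  have l4: "\<forall>k. t k / c > 0" using t(1) cp by simp
  show ?thesis unfolding tangent_cone_def
    apply (rule CollectI, rule conjI[OF t(5)])
    apply (rule exI[of _ "\<lambda>k. t k / c"], rule exI[of _ "\<lambda>k. c *\<^sub>R wk k"])
    using l1 l2 l3 l4 by blast
qed

lemma tangent_cone_epsD:
  assumes "w \<in> tangent_cone S z" "e > 0"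
  shows "\<exists>t v. 0 < t \<and> t < e \<and> dist v w < e \<and> z + t *\<^sub>R v \<in> S"
proof -
  from assms(1) obtain t wk where t: "\<forall>k. t k > 0" "t \<longlonglongrightarrow> 0" "wk \<longlonglongrightarrow> w" "\<forall>k. z + t k *\<^sub>R wk k \<in> S"
    unfolding tangent_cone_def by blast
  have e1: "eventually (\<lambda>k. t k < e) sequentially" using order_tendstoD(2)[OF t(2) assms(2)] .
  have e2: "eventually (\<lambda>k. dist (wk k) w < e) sequentially" using tendstoD[OF t(3) assms(2)] .
  have "eventually (\<lambda>k. t k < e \<and> dist (wk k) w < e) sequentially" using eventually_conj[OF e1 e2] .
  then obtain N where N: "\<And>k. k \<ge> N \<Longrightarrow> t k < e \<and> dist (wk k) w < e" unfolding eventually_sequentially by blast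
  have "0 < t N" "t N < e" "dist (wk N) w < e" "z + t N *\<^sub>R wk N \<in> S" using N[of N] t(1,4) by auto
  then show ?thesis by blast
qed

lemma closed_tangent_cone: "closed (tangent_cone S z)"
proof (cases "z \<in> S")
  case False
  then have "tangent_cone S z = {}" by (auto simp: tangent_cone_def)
  then show ?thesis by simp
next
  case True
  show ?thesis unfolding closed_limpt
  proof (intro allI impI)
    fix w assume lim: "w islimpt tangent_cone S z"
    show "w \<in> tangent_cone S z"
    proof (rule tangent_cone_eps[OF True])
      fix e :: real assume e: "e > 0"
      then have e2: "e/2 > 0" by simp
      from lim e2 obtain w' where w': "w' \<in> tangent_cone S z" "dist w' w < e/2"
        unfolding islimpt_approachable by blast
      obtain t v where tv: "0 < t" "t < e/2" "dist v w' < e/2" "z + t *\<^sub>R v \<in> S"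
        using tangent_cone_epsD[OF w'(1) e2] by blast
      have "dist v w \<le> dist v w' + dist w' w" by (rule dist_triangle)
      then have "dist v w < e" using tv(3) w'(2) by linarith
      moreover have "t < e" using tv(2) e by linarith
      ultimately show "\<exists>t v. 0 < t \<and> t < e \<and> dist v w < e \<and> z + t *\<^sub>R v \<in> S"
        using tv(1,4) by blast
    qed
  qed
qed

lemma tangent_cone_self:
  assumes "x \<in> S" "\<And>y c. y \<in> S \<Longrightarrow> 0 \<le> c \<Longrightarrow> c *\<^sub>R y \<in> S"
  shows "x \<in> tangent_cone S x" "-x \<in> tangent_cone S x"
proof -
  show "x \<in> tangent_cone S x"
  proof (rule tangent_cone_eps[OF assms(1)])
    fix e :: real assume e: "e > 0"
    have "(1 + e/2) *\<^sub>R x \<in> S" using assms(2)[OF assms(1)] e by simp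
    then have "x + (e/2) *\<^sub>R x \<in> S" by (simp add: algebra_simps)
    moreover have "0 < e/2" "e/2 < e" "dist x x < e" using e by simp_all
    ultimately show "\<exists>t v. 0 < t \<and> t < e \<and> dist v x < e \<and> x + t *\<^sub>R v \<in> S" by blast
  qed
  show "-x \<in> tangent_cone S x"
  proof (rule tangent_cone_eps[OF assms(1)])
    fix e :: real assume e: "e > 0"
    define t where "t = min (e/2) (1/2)"
    have t: "0 < t" "t < e" "t \<le> 1/2" using e by (auto simp: t_def)
    have "(1 - t) *\<^sub>R x \<in> S" using assms(2)[OF assms(1)] t by simp
    then have "x + t *\<^sub>R (-x) \<in> S" by (simp add: algebra_simps)
    moreover have "dist (-x) (-x) < e" using e by simp
    ultimately show "\<exists>t v. 0 < t \<and> t < e \<and> dist v (-x) < e \<and> x + t *\<^sub>R v \<in> S" using t by blast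
  qed
qed

lemma le_eps_imp_le:
  fixes a K :: real
  assumes "\<And>e. 0 < e \<Longrightarrow> e \<le> 1 \<Longrightarrow> a \<le> e * K"
  shows "a \<le> 0"
proof (rule ccontr)
  assume "\<not> a \<le> 0"
  then have a: "a > 0" by simp
  define e where "e = min 1 (a / (2 * (\<bar>K\<bar> + 1)))"
  have e: "0 < e" "e \<le> 1" using a by (auto simp: e_def)
  have "e * K \<le> e * (\<bar>K\<bar> + 1)" using e by (intro mult_left_mono) auto
  also have "\<dots> \<le> (a / (2 * (\<bar>K\<bar> + 1))) * (\<bar>K\<bar> + 1)"
    by (intro mult_right_mono) (auto simp: e_def)
  also have "\<dots> = a / 2" by (simp add: field_simps)
  finally have "e * K \<le> a / 2" .
  with assms[OF e] a show False by linarith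
qed

lemma nearest_polar:
  fixes x p :: "'a::real_inner"
  assumes xS: "x \<in> S" and near: "\<And>y. y \<in> S \<Longrightarrow> norm (p - x) \<le> norm (p - y)"
  shows "p - x \<in> polar_cone (tangent_cone S x)"
  unfolding polar_cone_def
proof (intro CollectI ballI)
  fix v assume v: "v \<in> tangent_cone S x"
  define r where "r = p - x"
  define K where "K = (norm v + 1)^2 / 2 + norm r"
  have "inner r v \<le> e * K" if e: "0 < e" "e \<le> 1" for e
  proof -
    obtain t v' where tv: "0 < t" "t < e" "dist v' v < e" "x + t *\<^sub>R v' \<in> S"
      using tangent_cone_epsD[OF v e(1)] by blast
    have "norm r \<le> norm (r - t *\<^sub>R v')"
      using near[OF tv(4)] by (simp add: r_def algebra_simps)
    then have "(norm r)^2 \<le> (norm (r - t *\<^sub>R v'))^2" by (simp add: power_mono)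
    also have "(norm (r - t *\<^sub>R v'))^2 = inner (r - t *\<^sub>R v') (r - t *\<^sub>R v')"
      by (rule power2_norm_eq_inner)
    also have "\<dots> = inner r r - 2 * t * inner r v' + t^2 * inner v' v'"
      by (simp add: inner_diff_left inner_diff_right inner_commute algebra_simps power2_eq_square)
    also have "\<dots> = (norm r)^2 - 2 * t * inner r v' + t^2 * (norm v')^2"
      by (simp add: power2_norm_eq_inner)
    finally have "2 * t * inner r v' \<le> t^2 * (norm v')^2" by simp
    then have "t * (2 * inner r v') \<le> t * (t * (norm v')^2)" by (simp add: power2_eq_square algebra_simps)
    then have i1: "2 * inner r v' \<le> t * (norm v')^2" using tv(1) by simp
    have nv: "norm v' \<le> norm v + 1"
      using tv(3) e(2) norm_triangle_ineq2[of v' v] by (simp add: dist_norm)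
    have "(norm v')^2 \<le> (norm v + 1)^2" using nv by (simp add: power_mono)
    then have "t * (norm v')^2 \<le> e * (norm v + 1)^2"
      using tv(1,2) by (intro mult_mono) auto
    with i1 have i2: "inner r v' \<le> e * ((norm v + 1)^2 / 2)" by simp
    have "inner r v = inner r v' + inner r (v - v')" by (simp add: inner_diff_right)
    also have "inner r (v - v') \<le> norm r * norm (v - v')" by (rule norm_cauchy_schwarz)
    also have "norm r * norm (v - v') \<le> norm r * e"
      using tv(3) by (intro mult_left_mono) (auto simp: dist_norm norm_minus_commute)
    finally show ?thesis using i2 by (simp add: K_def algebra_simps)
  qed
  then have "inner r v \<le> 0" by (rule le_eps_imp_le)
  then show "inner (p - x) v \<le> 0" by (simp add: r_def)
qed

lemma min_polar:
  fixes f u :: "'a::real_inner"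
  assumes uS: "u \<in> S" and mn: "\<And>y. y \<in> S \<Longrightarrow> inner f u \<le> inner f y"
  shows "-f \<in> polar_cone (tangent_cone S u)"
  unfolding polar_cone_def
proof (intro CollectI ballI)
  fix v assume v: "v \<in> tangent_cone S u"
  have "inner (-f) v \<le> e * norm f" if e: "0 < e" "e \<le> 1" for e
  proof -
    obtain t v' where tv: "0 < t" "t < e" "dist v' v < e" "u + t *\<^sub>R v' \<in> S"
      using tangent_cone_epsD[OF v e(1)] by blast
    have "inner f u \<le> inner f u + t * inner f v'" using mn[OF tv(4)] by (simp add: inner_add_right)
    then have "0 \<le> t * inner f v'" by simp
    then have i1: "0 \<le> inner f v'" using tv(1) by (simp add: zero_le_mult_iff)
    have "inner (-f) v = - inner f v' + inner f (v' - v)" by (simp add: inner_diff_right)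
    also have "inner f (v' - v) \<le> norm f * norm (v' - v)" by (rule norm_cauchy_schwarz)
    also have "norm f * norm (v' - v) \<le> norm f * e"
      using tv(3) by (intro mult_left_mono) (auto simp: dist_norm)
    finally show ?thesis using i1 by (simp add: algebra_simps)
  qed
  then show "inner (-f) v \<le> 0" by (rule le_eps_imp_le)
qed

lemma Lsp_eq:
  fixes C :: "'a::real_vector set"
  shows "Lsp C = {l. \<forall>c\<in>C. \<forall>s::real. c + s *\<^sub>R l \<in> C}"
proof -
  define V where "V = {l. \<forall>c\<in>C. \<forall>s::real. c + s *\<^sub>R l \<in> C}"
  have subV: "subspace V" unfolding subspace_def V_def
  proof (intro conjI ballI allI CollectI)
    fix c s assume "c \<in> C" then show "c + s *\<^sub>R (0::'a) \<in> C" by simp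
  next
    fix x y c s assume x: "x \<in> {l. \<forall>c\<in>C. \<forall>s::real. c + s *\<^sub>R l \<in> C}" and y: "y \<in> {l. \<forall>c\<in>C. \<forall>s::real. c + s *\<^sub>R l \<in> C}" and c: "c \<in> C"
    have "c + s *\<^sub>R x \<in> C" using x c by blast
    then have "(c + s *\<^sub>R x) + s *\<^sub>R y \<in> C" using y by blast
    then show "c + s *\<^sub>R (x + y) \<in> C" by (simp add: algebra_simps)
  next
    fix a x c s assume x: "x \<in> {l. \<forall>c\<in>C. \<forall>s::real. c + s *\<^sub>R l \<in> C}" and c: "c \<in> C"
    have "c + (s * a) *\<^sub>R x \<in> C" using x c by blast
    then show "c + s *\<^sub>R (a *\<^sub>R x) \<in> C" by simp
  qed
  have sumV: "{c + l | c l. c \<in> C \<and> l \<in> V} \<subseteq> C"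
  proof
    fix y assume "y \<in> {c + l | c l. c \<in> C \<and> l \<in> V}"
    then obtain c l where "y = c + l" "c \<in> C" "l \<in> V" by blast
    then show "y \<in> C" unfolding V_def using scaleR_one[of l] by (metis (no_types, lifting) mem_Collect_eq)
  qed
  have maxV: "L' \<subseteq> V" if "subspace L'" "{c + l | c l. c \<in> C \<and> l \<in> L'} \<subseteq> C" for L'
  proof
    fix l assume l: "l \<in> L'"
    show "l \<in> V" unfolding V_def
    proof (intro CollectI ballI allI)
      fix c s assume c: "c \<in> C"
      have "s *\<^sub>R l \<in> L'" using that(1) l by (rule subspace_scale)
      then show "c + s *\<^sub>R l \<in> C" using that(2) c by blast
    qed
  qed
  have "Lsp C = V" unfolding Lsp_def
  proof (rule the_equality)
    show "subspace V \<and> {c + l | c l. c \<in> C \<and> l \<in> V} \<subseteq> C \<and>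
      (\<forall>L'. subspace L' \<and> {c + l | c l. c \<in> C \<and> l \<in> L'} \<subseteq> C \<longrightarrow> L' \<subseteq> V)"
      using subV sumV maxV by blast
  next
    fix L assume L: "subspace L \<and> {c + l | c l. c \<in> C \<and> l \<in> L} \<subseteq> C \<and>
      (\<forall>L'. subspace L' \<and> {c + l | c l. c \<in> C \<and> l \<in> L'} \<subseteq> C \<longrightarrow> L' \<subseteq> L)"
    have "L \<subseteq> V" using maxV L by blast
    moreover have "V \<subseteq> L" using L subV sumV by blast
    ultimately show "L = V" by blast
  qed
  then show ?thesis by (simp add: V_def)
qed

lemma affine_linear_image_aux:
  assumes "linear M" "affine E" shows "affine (M ` E)"
  unfolding affine_def
proof (intro ballI allI impI)
  fix x y u v assume x: "x \<in> M ` E" and y: "y \<in> M ` E" and uv: "u + v = (1::real)"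
  obtain a b where ab: "a \<in> E" "b \<in> E" "x = M a" "y = M b" using x y by blast
  have "u *\<^sub>R a + v *\<^sub>R b \<in> E" using assms(2) ab(1,2) uv unfolding affine_def by blast
  moreover have "M (u *\<^sub>R a + v *\<^sub>R b) = u *\<^sub>R x + v *\<^sub>R y"
    using ab(3,4) by (simp add: linear_add[OF assms(1)] linear_scale[OF assms(1)])
  ultimately show "u *\<^sub>R x + v *\<^sub>R y \<in> M ` E" by (metis image_eqI)
qed

lemma poly_min_attained:
  fixes M :: "'a::euclidean_space \<Rightarrow> 'b::euclidean_space" and a :: "'i \<Rightarrow> 'a"
  assumes lin: "linear M" and fin: "finite I"
  shows "affine E \<Longrightarrow> x0 \<in> E \<Longrightarrow> (\<forall>i\<in>I. inner (a i) x0 \<le> b i) \<Longrightarrow>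
    \<exists>x\<in>E. (\<forall>i\<in>I. inner (a i) x \<le> b i) \<and> (\<forall>y\<in>E. (\<forall>i\<in>I. inner (a i) y \<le> b i) \<longrightarrow> norm (M x) \<le> norm (M y))"
  using fin
proof (induction I arbitrary: E x0 rule: finite_induct)
  case empty
  have "affine (M ` E)" by (rule affine_linear_image_aux[OF lin empty.prems(1)])
  then have cl: "closed (M ` E)" by (rule affine_closed)
  have ne: "M ` E \<noteq> {}" using empty.prems(2) by blast
  obtain m where m: "m \<in> M ` E" "\<And>y. y \<in> M ` E \<Longrightarrow> dist 0 m \<le> dist 0 y"
    using distance_attains_inf[OF cl ne, of 0] by blast
  obtain x where x: "x \<in> E" "m = M x" using m(1) by blast
  have "\<forall>y\<in>E. norm (M x) \<le> norm (M y)"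
  proof
    fix y assume "y \<in> E"
    then have "dist 0 m \<le> dist 0 (M y)" using m(2) by blast
    then show "norm (M x) \<le> norm (M y)" using x(2) by simp
  qed
  then show ?case using x(1) by blast
next
  case (insert j I)
  have xI: "\<forall>i\<in>I. inner (a i) x0 \<le> b i" using insert.prems(3) by blast
  obtain x' where x': "x' \<in> E" "\<forall>i\<in>I. inner (a i) x' \<le> b i"
    "\<forall>y\<in>E. (\<forall>i\<in>I. inner (a i) y \<le> b i) \<longrightarrow> norm (M x') \<le> norm (M y)"
    using insert.IH[OF insert.prems(1,2) xI] by blast
  show ?case
  proof (cases "inner (a j) x' \<le> b j")
    case True
    then show ?thesis using x' by (intro bexI[of _ x']) auto
  next
    case False
    define E' where "E' = E \<inter> {x. inner (a j) x = b j}"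
    have affE': "affine E'" unfolding E'_def using insert.prems(1) affine_hyperplane by blast
    have claim: "\<exists>z\<in>E'. (\<forall>i\<in>I. inner (a i) z \<le> b i) \<and> norm (M z) \<le> norm (M y)"
      if y: "y \<in> E" "\<forall>i\<in>insert j I. inner (a i) y \<le> b i" for y
    proof -
      have yj: "inner (a j) y \<le> b j" using y(2) by blast
      have yI: "\<forall>i\<in>I. inner (a i) y \<le> b i" using y(2) by blast
      define d where "d = inner (a j) x' - inner (a j) y"
      have dpos: "d > 0" using False yj by (simp add: d_def)
      define th where "th = (b j - inner (a j) y) / d"
      have th0: "0 \<le> th" using yj dpos by (simp add: th_def)
      have th1: "th \<le> 1" using False dpos by (simp add: th_def d_def)
      define z where "z = (1 - th) *\<^sub>R y + th *\<^sub>R x'"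
      have zE: "z \<in> E" using insert.prems(1) y(1) x'(1) unfolding affine_def z_def by simp
      have "inner (a j) z = inner (a j) y + th * d"
        by (simp add: z_def inner_add_right d_def algebra_simps)
      also have "\<dots> = b j" using dpos by (simp add: th_def)
      finally have zj: "inner (a j) z = b j" .
      have zI: "\<forall>i\<in>I. inner (a i) z \<le> b i"
      proof
        fix i assume i: "i \<in> I"
        have "inner (a i) z = (1 - th) * inner (a i) y + th * inner (a i) x'"
          by (simp add: z_def inner_add_right)
        also have "\<dots> \<le> b i" using yI x'(2) i th0 th1 by (intro convex_bound_le) auto
        finally show "inner (a i) z \<le> b i" .
      qed
      have "M z = (1 - th) *\<^sub>R M y + th *\<^sub>R M x'"
        by (simp add: z_def linear_add[OF lin] linear_scale[OF lin])
      then have "norm (M z) \<le> norm ((1 - th) *\<^sub>R M y) + norm (th *\<^sub>R M x')"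
        using norm_triangle_ineq[of "(1 - th) *\<^sub>R M y" "th *\<^sub>R M x'"] by simp
      also have "\<dots> = (1 - th) * norm (M y) + th * norm (M x')" using th0 th1 by simp
      also have "\<dots> \<le> (1 - th) * norm (M y) + th * norm (M y)"
        using x'(3) y(1) yI th0 by (intro add_left_mono mult_left_mono) auto
      also have "\<dots> = norm (M y)" by (simp add: algebra_simps)
      finally show ?thesis using zE zj zI unfolding E'_def by blast
    qed
    obtain z0 where z0: "z0 \<in> E'" "\<forall>i\<in>I. inner (a i) z0 \<le> b i"
      using claim[OF insert.prems(2,3)] by blast
    obtain xF where xF: "xF \<in> E'" "\<forall>i\<in>I. inner (a i) xF \<le> b i"
      "\<forall>y\<in>E'. (\<forall>i\<in>I. inner (a i) y \<le> b i) \<longrightarrow> norm (M xF) \<le> norm (M y)"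
      using insert.IH[OF affE' z0(1,2)] by blast
    have xFE: "xF \<in> E" "inner (a j) xF = b j" using xF(1) unfolding E'_def by auto
    have "\<forall>y\<in>E. (\<forall>i\<in>insert j I. inner (a i) y \<le> b i) \<longrightarrow> norm (M xF) \<le> norm (M y)"
    proof (intro ballI impI)
      fix y assume y: "y \<in> E" "\<forall>i\<in>insert j I. inner (a i) y \<le> b i"
      obtain z where z: "z \<in> E'" "\<forall>i\<in>I. inner (a i) z \<le> b i" "norm (M z) \<le> norm (M y)"
        using claim[OF y] by blast
      have "norm (M xF) \<le> norm (M z)" using xF(3) z(1,2) by blast
      then show "norm (M xF) \<le> norm (M y)" using z(3) by linarith
    qed
    moreover have "\<forall>i\<in>insert j I. inner (a i) xF \<le> b i" using xF(2) xFE(2) by simp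
    ultimately show ?thesis using xFE(1) by blast
  qed
qed

lemma closed_poly_piece: "closed {z. \<forall>i<(p::nat). inner (a i) z \<le> (al i::real)}"
proof -
  have "{z. \<forall>i<p. inner (a i) z \<le> al i} = (\<Inter>i\<in>{..<p}. {z. inner (a i) z \<le> al i})" by auto
  moreover have "closed (\<Inter>i\<in>{..<p}. {z. inner (a i) z \<le> al i})"
    by (intro closed_INT ballI closed_halfspace_le)
  ultimately show ?thesis by simp
qed

lemma tendsto_ray_inner:
  "((\<lambda>s::real. inner a (x + s *\<^sub>R k)) \<longlongrightarrow> inner a x) (at_right 0)"
proof -
  have l0: "((\<lambda>s::real. s) \<longlongrightarrow> 0) (at_right 0)" by (rule tendsto_ident_at)
  have l1: "((\<lambda>s::real. s *\<^sub>R k) \<longlongrightarrow> 0 *\<^sub>R k) (at_right 0)" by (rule tendsto_scaleR[OF l0 tendsto_const])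
  have l2: "((\<lambda>s. x + s *\<^sub>R k) \<longlongrightarrow> x + 0 *\<^sub>R k) (at_right 0)" by (rule tendsto_add[OF tendsto_const l1])
  have l3: "((\<lambda>s. inner a (x + s *\<^sub>R k)) \<longlongrightarrow> inner a (x + 0 *\<^sub>R k)) (at_right 0)"
    by (rule tendsto_inner[OF tendsto_const l2])
  then show ?thesis by simp
qed

lemma poly_local:
  fixes C :: "'a::euclidean_space set"
  assumes "polyhedral_set C" "x \<in> C"
  obtains r and Q :: "(nat set \<times> (nat \<Rightarrow> 'a)) set" where "r > 0" "finite Q"
    "\<And>z. z \<in> C \<Longrightarrow> dist z x < r \<Longrightarrow> \<exists>IA\<in>Q. \<forall>i\<in>fst IA. inner (snd IA i) (z - x) \<le> 0"
    "\<And>IA. IA \<in> Q \<Longrightarrow> finite (fst IA)"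
    "\<And>IA k. IA \<in> Q \<Longrightarrow> (\<forall>i\<in>fst IA. inner (snd IA i) k \<le> 0) \<Longrightarrow> eventually (\<lambda>s. x + s *\<^sub>R k \<in> C) (at_right 0)"
proof -
  obtain F where F: "finite F" "C = \<Union>F" "\<forall>Q\<in>F. \<exists>(p::nat) a al. Q = {z. \<forall>i<p. inner (a i) z \<le> al i}"
    using assms(1) unfolding polyhedral_set_def by blast
  have "\<forall>Q\<in>F. \<exists>rep. Q = {z. \<forall>i<(fst rep::nat). inner (fst (snd rep) i) z \<le> snd (snd rep) i}"
  proof
    fix Q assume "Q \<in> F"
    then obtain p a al where "Q = {z. \<forall>i<(p::nat). inner (a i) z \<le> al i}" using F(3) by blast
    then have "Q = {z. \<forall>i<fst (p, a, al). inner (fst (snd (p, a, al)) i) z \<le> snd (snd (p, a, al)) i}"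
      by simp
    then show "\<exists>rep. Q = {z. \<forall>i<(fst rep::nat). inner (fst (snd rep) i) z \<le> snd (snd rep) i}"
      by (rule exI)
  qed
  from bchoice[OF this] obtain rep where rep0: "\<forall>Q\<in>F. Q = {z. \<forall>i<(fst (rep Q)::nat). inner (fst (snd (rep Q)) i) z \<le> snd (snd (rep Q)) i}"
    by blast
  have rep: "\<And>Q. Q \<in> F \<Longrightarrow> Q = {z. \<forall>i<(fst (rep Q)::nat). inner (fst (snd (rep Q)) i) z \<le> snd (snd (rep Q)) i}"
    using rep0 by blast
  define pp where "pp Q = fst (rep Q)" for Q
  define aa where "aa Q = fst (snd (rep Q))" for Q
  define al where "al Q = snd (snd (rep Q))" for Q
  have repQ: "\<And>Q. Q \<in> F \<Longrightarrow> Q = {z. \<forall>i<pp Q. inner (aa Q i) z \<le> al Q i}"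
    unfolding pp_def aa_def al_def using rep by blast
  define act where "act Q = {i. i < pp Q \<and> inner (aa Q i) x = al Q i}" for Q
  define QQ where "QQ = (\<lambda>Q. (act Q, aa Q)) ` {Q\<in>F. x \<in> Q}"
  define U where "U = \<Union>{Q\<in>F. x \<notin> Q}"
  have clU: "closed U" unfolding U_def
  proof (rule closed_Union)
    show "finite {Q \<in> F. x \<notin> Q}" using F(1) by simp
    show "\<forall>T\<in>{Q \<in> F. x \<notin> Q}. closed T"
    proof
      fix T assume "T \<in> {Q \<in> F. x \<notin> Q}"
      then have "T \<in> F" by simp
      then have "T = {z. \<forall>i<pp T. inner (aa T i) z \<le> al T i}" by (rule repQ)
      then show "closed T" using closed_poly_piece by metis
    qed
  qed
  have xU: "x \<in> - U" unfolding U_def by blast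
  obtain r where r: "r > 0" "ball x r \<subseteq> - U"
    using open_contains_ball[of "- U"] clU xU by (metis open_Compl)
  have finQQ: "finite QQ" unfolding QQ_def using F(1) by simp
  have P3: "\<exists>IA\<in>QQ. \<forall>i\<in>fst IA. inner (snd IA i) (z - x) \<le> 0" if z: "z \<in> C" "dist z x < r" for z
  proof -
    obtain Q where Q: "Q \<in> F" "z \<in> Q" using z(1) F(2) by blast
    have "z \<in> ball x r" using z(2) by (simp add: dist_commute)
    then have "z \<notin> U" using r(2) by blast
    then have xQ: "x \<in> Q" using Q unfolding U_def by blast
    have zQ: "\<forall>i<pp Q. inner (aa Q i) z \<le> al Q i" using Q(2) repQ[OF Q(1)] by blast
    have "\<forall>i\<in>act Q. inner (aa Q i) (z - x) \<le> 0"
    proof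
      fix i assume "i \<in> act Q"
      then have "i < pp Q" "inner (aa Q i) x = al Q i" unfolding act_def by auto
      then show "inner (aa Q i) (z - x) \<le> 0" using zQ by (simp add: inner_diff_right)
    qed
    moreover have "(act Q, aa Q) \<in> QQ" unfolding QQ_def using Q(1) xQ by blast
    ultimately show ?thesis by (intro bexI[of _ "(act Q, aa Q)"]) auto
  qed
  have P4: "finite (fst IA)" if IA: "IA \<in> QQ" for IA
  proof -
    obtain Q where "IA = (act Q, aa Q)" using IA unfolding QQ_def by blast
    then show ?thesis by (simp add: act_def)
  qed
  have P5: "eventually (\<lambda>s. x + s *\<^sub>R k \<in> C) (at_right 0)"
    if IA: "IA \<in> QQ" and k: "\<forall>i\<in>fst IA. inner (snd IA i) k \<le> 0" for IA k
  proof -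
    obtain Q where Q: "Q \<in> F" "x \<in> Q" "IA = (act Q, aa Q)" using IA unfolding QQ_def by blast
    have xQ: "\<forall>i<pp Q. inner (aa Q i) x \<le> al Q i" using Q(2) repQ[OF Q(1)] by blast
    have ev: "\<forall>i\<in>{..<pp Q}. eventually (\<lambda>s. inner (aa Q i) (x + s *\<^sub>R k) \<le> al Q i) (at_right 0)"
    proof
      fix i assume i: "i \<in> {..<pp Q}"
      show "eventually (\<lambda>s. inner (aa Q i) (x + s *\<^sub>R k) \<le> al Q i) (at_right 0)"
      proof (cases "inner (aa Q i) x = al Q i")
        case True
        then have "i \<in> fst IA" using i Q(3) by (simp add: act_def)
        then have ik: "inner (aa Q i) k \<le> 0" using k Q(3) by simp
        have "eventually (\<lambda>s::real. 0 < s) (at_right 0)" by (rule eventually_at_right_less)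
        then show ?thesis
        proof (rule eventually_mono)
          fix s :: real assume "0 < s"
          then have "s * inner (aa Q i) k \<le> 0" using ik by (simp add: mult_nonneg_nonpos)
          then show "inner (aa Q i) (x + s *\<^sub>R k) \<le> al Q i" using True by (simp add: inner_add_right)
        qed
      next
        case False
        then have lt: "inner (aa Q i) x < al Q i" using xQ i by (simp add: order.not_eq_order_implies_strict)
        have "eventually (\<lambda>s. inner (aa Q i) (x + s *\<^sub>R k) < al Q i) (at_right 0)"
          by (rule order_tendstoD(2)[OF tendsto_ray_inner lt])
        then show ?thesis by (rule eventually_mono) simp
      qed
    qed
    have "eventually (\<lambda>s. \<forall>i\<in>{..<pp Q}. inner (aa Q i) (x + s *\<^sub>R k) \<le> al Q i) (at_right 0)"
      by (rule eventually_ball_finite[OF _ ev]) simp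
    then show ?thesis
    proof (rule eventually_mono)
      fix s assume "\<forall>i\<in>{..<pp Q}. inner (aa Q i) (x + s *\<^sub>R k) \<le> al Q i"
      then have "x + s *\<^sub>R k \<in> Q" using repQ[OF Q(1)] by auto
      then show "x + s *\<^sub>R k \<in> C" using Q(1) F(2) by blast
    qed
  qed
  show ?thesis by (rule that[OF r(1) finQQ P3 P4 P5])
qed

lemma polar_scale:
  assumes "r \<in> polar_cone K" "0 \<le> c" shows "c *\<^sub>R r \<in> polar_cone K"
  using assms unfolding polar_cone_def by (auto simp: mult_nonneg_nonpos)

lemma attained_case:
  fixes A :: "real^'d^'s" and g :: "real^'d" and T :: "(real^'s) set"
  assumes coneT: "\<And>x c. x \<in> T \<Longrightarrow> 0 \<le> c \<Longrightarrow> c *\<^sub>R x \<in> T"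
    and gpos: "\<And>u. A *v u \<in> T \<Longrightarrow> 0 \<le> inner g u"
    and us: "inner g us = -1" and ts: "ts \<in> T"
    and mn: "\<And>u t. inner g u = -1 \<Longrightarrow> t \<in> T \<Longrightarrow> norm (A *v us - ts) \<le> norm (A *v u - t)"
  shows "\<exists>w\<in>T. \<exists>ws\<in>polar_cone (tangent_cone T w). g + transpose A *v ws = 0"
proof -
  define r where "r = A *v us - ts"
  have rne: "r \<noteq> 0"
  proof
    assume "r = 0"
    then have "A *v us \<in> T" using ts by (simp add: r_def)
    then have "0 \<le> inner g us" by (rule gpos)
    then show False using us by simp
  qed
  have rpol: "r \<in> polar_cone (tangent_cone T ts)"
    unfolding r_def by (rule nearest_polar[OF ts]) (rule mn[OF us])
  have "ts \<in> tangent_cone T ts" "-ts \<in> tangent_cone T ts"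
    using tangent_cone_self[OF ts] coneT by blast+
  then have "inner r ts \<le> 0" "inner r (-ts) \<le> 0" using rpol unfolding polar_cone_def by blast+
  then have rts: "inner r ts = 0" by simp
  define x where "x = transpose A *v r"
  have xA: "inner x h = inner r (A *v h)" for h
    unfolding x_def by (simp add: dot_lmul_matrix)
  have xorth: "inner x h = 0" if h: "inner g h = 0" for h
  proof -
    define c where "c = inner r (A *v h)"
    define b where "b = inner (A *v h) (A *v h)"
    have b0: "0 \<le> b" unfolding b_def by simp
    have key: "0 \<le> 2 * s * c + s^2 * b" for s :: real
    proof -
      have "inner g (us + s *\<^sub>R h) = -1" using us h by (simp add: inner_add_right)
      then have "norm r \<le> norm (A *v (us + s *\<^sub>R h) - ts)" unfolding r_def using mn ts by blast
      also have "A *v (us + s *\<^sub>R h) - ts = r + s *\<^sub>R (A *v h)"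
        by (simp add: r_def matrix_vector_right_distrib matrix_vector_mult_scaleR algebra_simps)
      finally have "(norm r)^2 \<le> (norm (r + s *\<^sub>R (A *v h)))^2" by (simp add: power_mono)
      also have "(norm (r + s *\<^sub>R (A *v h)))^2 = inner (r + s *\<^sub>R (A *v h)) (r + s *\<^sub>R (A *v h))"
        by (rule power2_norm_eq_inner)
      also have "\<dots> = inner r r + 2 * s * c + s^2 * b"
        by (simp add: c_def b_def inner_add_left inner_add_right inner_commute algebra_simps power2_eq_square)
      also have "inner r r = (norm r)^2" by (simp add: power2_norm_eq_inner)
      finally show ?thesis by simp
    qed
    have c1: "c \<le> e * (b / 2)" if e: "0 < e" "e \<le> 1" for e
    proof -
      have "0 \<le> 2 * (-e) * c + (-e)^2 * b" by (rule key)
      then have "e * (2 * c) \<le> e * (e * b)" by (simp add: power2_eq_square algebra_simps)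
      then have "2 * c \<le> e * b" using e(1) by (rule mult_left_le_imp_le)
      then show ?thesis by simp
    qed
    have c2: "- c \<le> e * (b / 2)" if e: "0 < e" "e \<le> 1" for e
    proof -
      have "0 \<le> 2 * e * c + e^2 * b" by (rule key)
      then have "e * (- 2 * c) \<le> e * (e * b)" by (simp add: power2_eq_square algebra_simps)
      then have "- 2 * c \<le> e * b" using e(1) by (rule mult_left_le_imp_le)
      then show ?thesis by simp
    qed
    have "c \<le> 0" using c1 by (rule le_eps_imp_le)
    moreover have "- c \<le> 0" using c2 by (rule le_eps_imp_le)
    ultimately have "c = 0" by simp
    then show ?thesis by (simp add: xA c_def)
  qed
  have gg: "inner g g > 0" using us by (metis inner_gt_zero_iff inner_zero_left zero_neq_neg_one)
  define c where "c = inner x g / inner g g"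
  define h where "h = x - c *\<^sub>R g"
  have gh: "inner g h = 0" unfolding h_def c_def using gg by (simp add: inner_diff_right inner_commute)
  have "inner h h = inner x h - c * inner g h" by (simp add: h_def inner_diff_left)
  also have "\<dots> = 0" using xorth[OF gh] gh by simp
  finally have "h = 0" by simp
  then have xg: "x = c *\<^sub>R g" by (simp add: h_def)
  have "inner x us = inner r (r + ts)" by (simp add: xA r_def)
  also have "\<dots> = inner r r" using rts by (simp add: inner_add_right)
  finally have "inner x us = inner r r" .
  moreover have "inner x us = - c" using us by (simp add: xg)
  ultimately have cval: "c = - inner r r" by simp
  have rr: "inner r r > 0" using rne by simp
  define ws where "ws = (1 / inner r r) *\<^sub>R r"
  have wsp: "ws \<in> polar_cone (tangent_cone T ts)" unfolding ws_def
    by (rule polar_scale[OF rpol]) (use rr in simp)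
  have "transpose A *v ws = (1 / inner r r) *\<^sub>R x" by (simp add: ws_def x_def matrix_vector_mult_scaleR)
  also have "\<dots> = - g" using rr by (simp add: xg cval)
  finally have "g + transpose A *v ws = 0" by simp
  then show ?thesis using ts wsp by blast
qed

lemma pigeon_freq:
  assumes "finite Q" "eventually (\<lambda>k. \<exists>q\<in>Q. P q k) F" "F \<noteq> bot"
  shows "\<exists>q\<in>Q. frequently (P q) F"
proof (rule ccontr)
  assume "\<not> (\<exists>q\<in>Q. frequently (P q) F)"
  then have "\<forall>q\<in>Q. eventually (\<lambda>k. \<not> P q k) F" unfolding frequently_def by blast
  then have "eventually (\<lambda>k. \<forall>q\<in>Q. \<not> P q k) F" by (rule eventually_ball_finite[OF assms(1)])
  then have "eventually (\<lambda>k. False) F"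
    using assms(2) by (rule eventually_elim2) blast
  then show False using assms(3) by (simp add: eventually_False)
qed

lemma core:
  fixes A :: "real^'d^'s" and g :: "real^'d" and T :: "(real^'s) set"
  assumes closedT: "closed T" and coneT: "\<And>x c. x \<in> T \<Longrightarrow> 0 \<le> c \<Longrightarrow> c *\<^sub>R x \<in> T"
    and T0: "0 \<in> T"
    and gpos: "\<And>u. A *v u \<in> T \<Longrightarrow> 0 \<le> inner g u"
  shows "(\<exists>w\<in>T. \<exists>ws\<in>polar_cone (tangent_cone T w). g + transpose A *v ws = 0) \<or>
         (\<exists>u. A *v u \<in> T \<and> A *v u \<notin> Lsp T \<and> inner g u = 0 \<and> \<not> locally_polyhedral T (A *v u))"
proof (cases "g = 0")
  case True
  have "(0::real^'s) \<in> polar_cone (tangent_cone T 0)" unfolding polar_cone_def by simp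
  moreover have "g + transpose A *v 0 = 0" using True by (simp only: matrix_vector_mult_0_right add_0)
  ultimately have "\<exists>w\<in>T. \<exists>ws\<in>polar_cone (tangent_cone T w). g + transpose A *v ws = 0" using T0 by blast
  then show ?thesis by (rule disjI1)
next
  case gne: False
  show ?thesis
  proof (cases "\<exists>w\<in>T. \<exists>ws\<in>polar_cone (tangent_cone T w). g + transpose A *v ws = 0")
    case True
    then show ?thesis by (rule disjI1)
  next
    case False
    then have noL: "\<not> (\<exists>w\<in>T. \<exists>ws\<in>polar_cone (tangent_cone T w). g + transpose A *v ws = 0)" .
    show ?thesis
    proof (rule disjI2)
    define obj where "obj = (\<lambda>(u::real^'d, t::real^'s). norm (A *v u - t))"
    define Feas where "Feas = {(u, t). inner g u = -1 \<and> t \<in> T}"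
    define del where "del = Inf (obj ` Feas)"
    have gg: "inner g g > 0" using gne by simp
    define u0 where "u0 = (- 1 / inner g g) *\<^sub>R g"
    have u0: "inner g u0 = -1" using gg by (simp add: u0_def)
    have FeasI: "(u, t) \<in> Feas" if "inner g u = -1" "t \<in> T" for u t using that by (simp add: Feas_def)
    have ne: "obj ` Feas \<noteq> {}" using FeasI[OF u0 T0] by blast
    have bdd: "bdd_below (obj ` Feas)" unfolding obj_def by (rule bdd_belowI[of _ 0]) auto
    have delle: "del \<le> norm (A *v u - t)" if "inner g u = -1" "t \<in> T" for u t
    proof -
      have "obj (u, t) \<in> obj ` Feas" using FeasI[OF that] by blast
      then have "del \<le> obj (u, t)" unfolding del_def by (rule cInf_lower[OF _ bdd])
      then show ?thesis by (simp add: obj_def)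
    qed
    have noatt: "del < norm (A *v u - t)" if ut: "inner g u = -1" "t \<in> T" for u t
    proof (rule ccontr)
      assume "\<not> del < norm (A *v u - t)"
      then have eq: "norm (A *v u - t) \<le> del" by simp
      have "\<exists>w\<in>T. \<exists>ws\<in>polar_cone (tangent_cone T w). g + transpose A *v ws = 0"
      proof (rule attained_case[OF coneT gpos ut])
        fix u' t' assume "inner g u' = -1" "t' \<in> T"
        then have "del \<le> norm (A *v u' - t')" by (rule delle)
        then show "norm (A *v u - t) \<le> norm (A *v u' - t')" using eq by linarith
      qed
      then show False using noL by blast
    qed
    define V where "V = Lsp T"
    have Veq: "V = {l. \<forall>c\<in>T. \<forall>s::real. c + s *\<^sub>R l \<in> T}" unfolding V_def by (rule Lsp_eq)
    define N where "N = {u. inner g u = 0 \<and> A *v u \<in> V}"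
    have subN: "subspace N" unfolding subspace_def
    proof (intro conjI ballI allI)
      show "0 \<in> N" unfolding N_def Veq by simp
    next
      fix x y assume x: "x \<in> N" and y: "y \<in> N"
      have "inner g (x + y) = 0" using x y by (simp add: N_def inner_add_right)
      moreover have "A *v (x + y) \<in> V" unfolding Veq
      proof (intro CollectI ballI allI)
        fix c s assume c: "c \<in> T"
        have "c + s *\<^sub>R (A *v x) \<in> T" using x c by (simp add: N_def Veq)
        then have "(c + s *\<^sub>R (A *v x)) + s *\<^sub>R (A *v y) \<in> T" using y by (simp add: N_def Veq)
        then show "c + s *\<^sub>R (A *v (x + y)) \<in> T" by (simp add: matrix_vector_right_distrib algebra_simps)
      qed
      ultimately show "x + y \<in> N" by (simp add: N_def)
    next
      fix a x assume x: "x \<in> N"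
      have "inner g (a *\<^sub>R x) = 0" using x by (simp add: N_def)
      moreover have "A *v (a *\<^sub>R x) \<in> V" unfolding Veq
      proof (intro CollectI ballI allI)
        fix c s assume c: "c \<in> T"
        have "c + (s * a) *\<^sub>R (A *v x) \<in> T" using x c by (simp add: N_def Veq)
        then show "c + s *\<^sub>R (A *v (a *\<^sub>R x)) \<in> T" by (simp add: matrix_vector_mult_scaleR)
      qed
      ultimately show "a *\<^sub>R x \<in> N" by (simp add: N_def)
    qed
    have spanN: "span N = N" using subN by simp
    have step: "\<exists>p. inner g (fst p) = -1 \<and> snd p \<in> T \<and> norm (A *v fst p - snd p) < del + 1 / (real k + 1)
                  \<and> (\<forall>n\<in>N. inner (fst p) n = 0)" for k
    proof -
      have "Inf (obj ` Feas) < del + 1 / (real k + 1)" unfolding del_def by simp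
      then obtain o1 where o1: "o1 \<in> obj ` Feas" "o1 < del + 1 / (real k + 1)"
        using cInf_lessD[OF ne] by blast
      then obtain u1 t1 where ut1: "inner g u1 = -1" "t1 \<in> T" "norm (A *v u1 - t1) < del + 1 / (real k + 1)"
        unfolding Feas_def obj_def by auto
      obtain y z where yz: "y \<in> span N" "\<And>w. w \<in> span N \<Longrightarrow> orthogonal z w" "u1 = y + z"
        using orthogonal_subspace_decomp_exists[of N u1] by blast
      have yN: "y \<in> N" using yz(1) spanN by simp
      have "inner g z = -1" using ut1(1) yN yz(3) by (simp add: N_def inner_add_right)
      moreover have "t1 - A *v y \<in> T"
      proof -
        have "A *v y \<in> V" using yN by (simp add: N_def)
        then have "t1 + (-1) *\<^sub>R (A *v y) \<in> T" using ut1(2) unfolding Veq by blast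
        then show ?thesis by simp
      qed
      moreover have "norm (A *v z - (t1 - A *v y)) < del + 1 / (real k + 1)"
      proof -
        have eq: "A *v z - (t1 - A *v y) = A *v u1 - t1" using yz(3) by (simp add: matrix_vector_right_distrib algebra_simps)
        show ?thesis unfolding eq by (rule ut1(3))
      qed
      moreover have "\<forall>n\<in>N. inner z n = 0" using yz(2) spanN by (simp add: orthogonal_def)
      ultimately show ?thesis by (intro exI[of _ "(z, t1 - A *v y)"]) simp
    qed
    then have "\<exists>f. \<forall>k. inner g (fst (f k)) = -1 \<and> snd (f k) \<in> T \<and> norm (A *v fst (f k) - snd (f k)) < del + 1 / (real k + 1)
                  \<and> (\<forall>n\<in>N. inner (fst (f k)) n = 0)" by (rule choice[OF allI])
    then obtain f where f: "\<forall>k. inner g (fst (f k)) = -1 \<and> snd (f k) \<in> T \<and> norm (A *v fst (f k) - snd (f k)) < del + 1 / (real k + 1)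
                  \<and> (\<forall>n\<in>N. inner (fst (f k)) n = 0)" by blast
    define U where "U k = fst (f k)" for k
    define Tt where "Tt k = snd (f k)" for k
    define OB where "OB k = norm (A *v U k - Tt k)" for k
    have U1: "inner g (U k) = -1" for k using f unfolding U_def by blast
    have TtT: "Tt k \<in> T" for k using f unfolding Tt_def by blast
    have OBlt: "OB k < del + 1 / (real k + 1)" for k using f unfolding OB_def U_def Tt_def by blast
    have UN: "inner (U k) n = 0" if "n \<in> N" for k n using f that unfolding U_def by blast
    have OBge: "del \<le> OB k" for k unfolding OB_def by (rule delle[OF U1 TtT])
    have OBlim: "OB \<longlonglongrightarrow> del"
    proof -
      have "(\<lambda>k. OB k - del) \<longlonglongrightarrow> 0"
      proof (rule sandwich0)
        fix k show "0 \<le> OB k - del" using OBge[of k] by simp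
        show "OB k - del \<le> 1 / (real k + 1)" using OBlt[of k] by simp
      qed
      then have "(\<lambda>k. (OB k - del) + del) \<longlonglongrightarrow> 0 + del" by (rule tendsto_add[OF _ tendsto_const])
      then show ?thesis by simp
    qed
    define lam where "lam k = 1 + norm (U k)" for k
    define sig where "sig k = 1 / lam k" for k
    define Y where "Y k = sig k *\<^sub>R U k" for k
    define S where "S k = sig k *\<^sub>R Tt k" for k
    have lam1: "lam k \<ge> 1" for k by (simp add: lam_def)
    have sigpos: "sig k > 0" for k using lam1[of k] by (simp add: sig_def)
    have sigle: "sig k \<le> 1" for k using lam1[of k] by (simp add: sig_def)
    have siglam: "sig k * lam k = 1" for k using lam1[of k] by (simp add: sig_def)
    have lamsig: "lam k * sig k = 1" for k using siglam[of k] by (simp add: mult.commute)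
    have Ulam: "U k = lam k *\<^sub>R Y k" for k using lamsig[of k] by (simp add: Y_def)
    have Ttlam: "Tt k = lam k *\<^sub>R S k" for k using lamsig[of k] by (simp add: S_def)
    have ST: "S k \<in> T" for k unfolding S_def using coneT[OF TtT] sigpos less_imp_le by blast
    have normY: "norm (Y k) = 1 - sig k" for k
    proof -
      have "norm (Y k) = norm (U k) / lam k" using lam1[of k] by (simp add: Y_def sig_def)
      also have "\<dots> = 1 - sig k"
      proof -
        have nz: "1 + norm (U k) \<noteq> 0" by (metis add_pos_nonneg norm_ge_zero zero_less_one less_irrefl)
        show ?thesis unfolding sig_def lam_def using nz by (simp add: field_simps)
      qed
      finally show ?thesis .
    qed
    have AYS: "A *v Y k - S k = sig k *\<^sub>R (A *v U k - Tt k)" for k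
      by (simp add: Y_def S_def matrix_vector_mult_scaleR algebra_simps)
    have normAYS: "norm (A *v Y k - S k) = sig k * OB k" for k
      using sigpos[of k] by (simp add: AYS OB_def)
    obtain KA where KA: "KA > 0" "\<And>x. norm (A *v x) \<le> norm x * KA"
      using bounded_linear.pos_bounded[OF matrix_vector_mul_bounded_linear[of A]] by blast
    have Sbd: "norm (S k) \<le> KA + (del + 1)" for k
    proof -
      have "S k = A *v Y k - (A *v Y k - S k)" by simp
      then have "norm (S k) \<le> norm (A *v Y k) + norm (A *v Y k - S k)"
        by (metis norm_triangle_ineq4)
      also have "norm (A *v Y k) \<le> KA"
      proof -
        have "norm (Y k) \<le> 1" using normY[of k] sigpos[of k] by simp
        then have "norm (Y k) * KA \<le> 1 * KA" using KA(1) by (intro mult_right_mono) auto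
        then show ?thesis using KA(2)[of "Y k"] by simp
      qed
      also have "norm (A *v Y k - S k) \<le> del + 1"
      proof -
        have "sig k * OB k \<le> 1 * OB k" using sigle[of k] by (intro mult_right_mono) (auto simp: OB_def)
        moreover have "OB k < del + 1" using OBlt[of k] by (smt (verit) divide_le_eq_1 of_nat_0_le_iff)
        ultimately show ?thesis using normAYS[of k] by simp
      qed
      finally show ?thesis by simp
    qed
    define Z where "Z k = (sig k, Y k, S k)" for k
    have bZ: "bounded (range Z)"
    proof -
      have "range Z \<subseteq> cball 0 1 \<times> (cball 0 1 \<times> cball 0 (KA + (del + 1)))"
      proof
        fix z assume "z \<in> range Z"
        then obtain k where k: "z = Z k" by blast
        have "norm (Y k) \<le> 1" using normY[of k] sigpos[of k] by simp
        moreover have "\<bar>sig k\<bar> \<le> 1" using sigpos[of k] sigle[of k] by simp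
        ultimately show "z \<in> cball 0 1 \<times> (cball 0 1 \<times> cball 0 (KA + (del + 1)))"
          using Sbd[of k] by (simp add: k Z_def)
      qed
      moreover have "bounded (cball (0::real) 1 \<times> (cball (0::real^'d) 1 \<times> cball (0::real^'s) (KA + (del + 1))))"
        by (intro bounded_Times bounded_cball)
      ultimately show ?thesis by (rule bounded_subset[rotated])
    qed
    obtain l rr where rr: "strict_mono rr" "(Z \<circ> rr) \<longlonglongrightarrow> l"
      using bounded_imp_convergent_subsequence[OF bZ] by blast
    define s0 where "s0 = fst l"
    define y0 where "y0 = fst (snd l)"
    define p0 where "p0 = snd (snd l)"
    have lsig: "(\<lambda>k. sig (rr k)) \<longlonglongrightarrow> s0"
      using tendsto_fst[OF rr(2)] by (simp add: s0_def Z_def o_def)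
    have lY: "(\<lambda>k. Y (rr k)) \<longlonglongrightarrow> y0"
      using tendsto_fst[OF tendsto_snd[OF rr(2)]] by (simp add: y0_def Z_def o_def)
    have lS: "(\<lambda>k. S (rr k)) \<longlonglongrightarrow> p0"
      using tendsto_snd[OF tendsto_snd[OF rr(2)]] by (simp add: p0_def Z_def o_def)
    have lOB: "(\<lambda>k. OB (rr k)) \<longlonglongrightarrow> del"
      using LIMSEQ_subseq_LIMSEQ[OF OBlim rr(1)] by (simp add: o_def)
    have lAY: "(\<lambda>k. A *v Y (rr k)) \<longlonglongrightarrow> A *v y0"
      by (rule bounded_linear.tendsto[OF matrix_vector_mul_bounded_linear lY])
    have p0T: "p0 \<in> T" using closed_sequentially[OF closedT _ lS] ST by blast
    show "\<exists>u. A *v u \<in> T \<and> A *v u \<notin> Lsp T \<and> inner g u = 0 \<and> \<not> locally_polyhedral T (A *v u)"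
    proof (cases "s0 = 0")
      case False
      have lU: "(\<lambda>k. U (rr k)) \<longlonglongrightarrow> (1 / s0) *\<^sub>R y0"
      proof -
        have "(\<lambda>k. (1 / sig (rr k)) *\<^sub>R Y (rr k)) \<longlonglongrightarrow> (1 / s0) *\<^sub>R y0"
          by (intro tendsto_scaleR tendsto_divide tendsto_const lsig lY False)
        moreover have "(1 / sig k) *\<^sub>R Y k = U k" for k using sigpos[of k] by (simp add: Y_def)
        ultimately show ?thesis by simp
      qed
      have lT: "(\<lambda>k. Tt (rr k)) \<longlonglongrightarrow> (1 / s0) *\<^sub>R p0"
      proof -
        have "(\<lambda>k. (1 / sig (rr k)) *\<^sub>R S (rr k)) \<longlonglongrightarrow> (1 / s0) *\<^sub>R p0"
          by (intro tendsto_scaleR tendsto_divide tendsto_const lsig lS False)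
        moreover have "(1 / sig k) *\<^sub>R S k = Tt k" for k using sigpos[of k] by (simp add: S_def)
        ultimately show ?thesis by simp
      qed
      define us where "us = (1 / s0) *\<^sub>R y0"
      define ts where "ts = (1 / s0) *\<^sub>R p0"
      have "(\<lambda>k. inner g (U (rr k))) \<longlonglongrightarrow> inner g us"
        unfolding us_def by (rule tendsto_inner[OF tendsto_const lU])
      moreover have "(\<lambda>k. inner g (U (rr k))) \<longlonglongrightarrow> -1" using U1 by simp
      ultimately have us1: "inner g us = -1" by (rule LIMSEQ_unique)
      have tsT: "ts \<in> T" unfolding ts_def using closed_sequentially[OF closedT _ lT] TtT by blast
      have "(\<lambda>k. OB (rr k)) \<longlonglongrightarrow> norm (A *v us - ts)"
        unfolding OB_def us_def ts_def
        by (intro tendsto_norm tendsto_diff lT bounded_linear.tendsto[OF matrix_vector_mul_bounded_linear lU])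
      then have "norm (A *v us - ts) = del" using lOB by (rule LIMSEQ_unique)
      then show ?thesis using noatt[OF us1 tsT] by simp
    next
      case True
      have "(\<lambda>k. norm (Y (rr k))) \<longlonglongrightarrow> norm y0" by (rule tendsto_norm[OF lY])
      moreover have "(\<lambda>k. norm (Y (rr k))) \<longlonglongrightarrow> 1 - 0"
        unfolding normY using True by (intro tendsto_diff tendsto_const) (use lsig in simp)
      ultimately have "norm y0 = 1 - 0" by (rule LIMSEQ_unique)
      then have ny0: "norm y0 = 1" by simp
      have "(\<lambda>k. inner g (Y (rr k))) \<longlonglongrightarrow> inner g y0" by (rule tendsto_inner[OF tendsto_const lY])
      moreover have "(\<lambda>k. inner g (Y (rr k))) \<longlonglongrightarrow> - 0"
      proof -
        have eq: "inner g (Y k) = - sig k" for k using U1[of k] by (simp add: Y_def)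
        have l: "(\<lambda>k. sig (rr k)) \<longlonglongrightarrow> 0" using lsig True by simp
        show ?thesis unfolding eq by (rule tendsto_minus[OF l])
      qed
      ultimately have "inner g y0 = - 0" by (rule LIMSEQ_unique)
      then have gy0: "inner g y0 = 0" by simp
      have "(\<lambda>k. norm (A *v Y (rr k) - S (rr k))) \<longlonglongrightarrow> norm (A *v y0 - p0)"
        by (intro tendsto_norm tendsto_diff lAY lS)
      moreover have "(\<lambda>k. norm (A *v Y (rr k) - S (rr k))) \<longlonglongrightarrow> 0 * del"
        unfolding normAYS using True by (intro tendsto_mult lOB) (use lsig in simp)
      ultimately have "norm (A *v y0 - p0) = 0 * del" by (rule LIMSEQ_unique)
      then have Ay0: "A *v y0 = p0" by simp
      have y0N: "inner y0 n = 0" if n: "n \<in> N" for n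
      proof -
        have "(\<lambda>k. inner (Y (rr k)) n) \<longlonglongrightarrow> inner y0 n" by (rule tendsto_inner[OF lY tendsto_const])
        moreover have "(\<lambda>k. inner (Y (rr k)) n) \<longlonglongrightarrow> 0"
        proof -
          have "inner (Y k) n = 0" for k using UN[OF n, of k] by (simp add: Y_def)
          then show ?thesis by simp
        qed
        ultimately show ?thesis by (rule LIMSEQ_unique)
      qed
      have notV: "A *v y0 \<notin> V"
      proof
        assume "A *v y0 \<in> V"
        then have "y0 \<in> N" using gy0 by (simp add: N_def)
        then have "inner y0 y0 = 0" by (rule y0N)
        then show False using ny0 by simp
      qed
      have notpoly: "\<not> locally_polyhedral T p0"
      proof
        assume "locally_polyhedral T p0"
        then obtain W C where WC: "open W" "p0 \<in> W" "polyhedral_set C" "T \<inter> W = C \<inter> W"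
          unfolding locally_polyhedral_def by blast
        have p0C: "p0 \<in> C" using WC(2,4) p0T by blast
        obtain r0 and QQ :: "(nat set \<times> (nat \<Rightarrow> real^'s)) set" where
          r0: "r0 > 0" and finQ: "finite QQ"
          and P3: "\<And>z. z \<in> C \<Longrightarrow> dist z p0 < r0 \<Longrightarrow> \<exists>IA\<in>QQ. \<forall>i\<in>fst IA. inner (snd IA i) (z - p0) \<le> 0"
          and P4: "\<And>IA. IA \<in> QQ \<Longrightarrow> finite (fst IA)"
          and P5: "\<And>IA k. IA \<in> QQ \<Longrightarrow> (\<forall>i\<in>fst IA. inner (snd IA i) k \<le> 0) \<Longrightarrow> eventually (\<lambda>s. p0 + s *\<^sub>R k \<in> C) (at_right 0)"
          using poly_local[OF WC(3) p0C] by blast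
        obtain rho where rho: "rho > 0" "ball p0 rho \<subseteq> W" using WC(1,2) open_contains_ball by blast
        define rm where "rm = min r0 rho"
        have rm: "rm > 0" using r0 rho(1) by (simp add: rm_def)
        have evS: "eventually (\<lambda>k. dist (S (rr k)) p0 < rm) sequentially"
          by (rule tendstoD[OF lS rm])
        define PP where "PP (IA::nat set \<times> (nat \<Rightarrow> real^'s)) k = (\<forall>i\<in>fst IA. inner (snd IA i) (S (rr k) - p0) \<le> 0)" for IA k
        have evP: "eventually (\<lambda>k. \<exists>IA\<in>QQ. PP IA k) sequentially"
          using evS
        proof (rule eventually_mono)
          fix k assume d: "dist (S (rr k)) p0 < rm"
          then have "S (rr k) \<in> ball p0 rho" by (simp add: rm_def dist_commute)
          then have "S (rr k) \<in> T \<inter> W" using rho(2) ST by blast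
          then have "S (rr k) \<in> C" using WC(4) by blast
          moreover have "dist (S (rr k)) p0 < r0" using d by (simp add: rm_def)
          ultimately show "\<exists>IA\<in>QQ. PP IA k" unfolding PP_def by (rule P3)
        qed
        obtain IA where IA: "IA \<in> QQ" "frequently (PP IA) sequentially"
          using pigeon_freq[OF finQ evP] by auto
        define M where "M = (\<lambda>x::(real^'d) \<times> (real^'s). A *v fst x - snd x)"
        have linM: "linear M" unfolding M_def
          by (rule linearI) (simp_all add: matrix_vector_right_distrib matrix_vector_mult_scaleR algebra_simps)
        define E where "E = {x::(real^'d) \<times> (real^'s). inner (g, 0) x = -1}"
        have affE: "affine E" unfolding E_def by (rule affine_hyperplane)
        define aI where "aI i = ((0::real^'d), snd IA i)" for i
        define e where "e k = (U (rr k) - lam (rr k) *\<^sub>R y0, Tt (rr k) - lam (rr k) *\<^sub>R p0)" for k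
        have eE: "e k \<in> E" for k
          using U1[of "rr k"] gy0 by (simp add: e_def E_def inner_diff_right)
        have eC: "\<forall>i\<in>fst IA. inner (aI i) (e k) \<le> (0::real)" if "PP IA k" for k
        proof
          fix i assume i: "i \<in> fst IA"
          have "Tt (rr k) - lam (rr k) *\<^sub>R p0 = lam (rr k) *\<^sub>R (S (rr k) - p0)"
            by (simp add: Ttlam algebra_simps)
          then have "inner (aI i) (e k) = lam (rr k) * inner (snd IA i) (S (rr k) - p0)"
            by (simp add: aI_def e_def)
          also have "\<dots> \<le> 0" using that i lam1[of "rr k"] unfolding PP_def
            by (intro mult_nonneg_nonpos) auto
          finally show "inner (aI i) (e k) \<le> 0" .
        qed
        have Me: "M (e k) = A *v U (rr k) - Tt (rr k)" for k
          by (simp add: M_def e_def Ay0 matrix_vector_mult_diff_distrib matrix_vector_mult_scaleR)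
        obtain k0 where k0: "PP IA k0" using frequently_ex[OF IA(2)] by blast
        obtain xm where xm: "xm \<in> E" "\<forall>i\<in>fst IA. inner (aI i) xm \<le> 0"
          "\<forall>y\<in>E. (\<forall>i\<in>fst IA. inner (aI i) y \<le> 0) \<longrightarrow> norm (M xm) \<le> norm (M y)"
          using poly_min_attained[OF linM P4[OF IA(1)] affE eE[of k0] eC[OF k0]] by blast
        have Mxm: "norm (M xm) \<le> del"
        proof (rule ccontr)
          assume "\<not> norm (M xm) \<le> del"
          then have "del < norm (M xm)" by simp
          then have "eventually (\<lambda>k. OB (rr k) < norm (M xm)) sequentially"
            by (rule order_tendstoD(2)[OF lOB])
          then have "frequently (\<lambda>k. PP IA k \<and> OB (rr k) < norm (M xm)) sequentially"
            by (rule frequently_eventually_frequently[OF IA(2)])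
          then obtain k where k: "PP IA k" "OB (rr k) < norm (M xm)" using frequently_ex by blast
          have "norm (M xm) \<le> norm (M (e k))" using xm(3) eE[of k] eC[OF k(1)] by blast
          also have "\<dots> = OB (rr k)" by (simp add: Me OB_def)
          finally show False using k(2) by simp
        qed
        define vs where "vs = fst xm"
        define ks where "ks = snd xm"
        have vs1: "inner g vs = -1" using xm(1) by (simp add: E_def vs_def inner_prod_def)
        have ksC: "\<forall>i\<in>fst IA. inner (snd IA i) ks \<le> 0" using xm(2) by (simp add: aI_def ks_def inner_prod_def)
        have ev1: "eventually (\<lambda>s. p0 + s *\<^sub>R ks \<in> C) (at_right 0)" by (rule P5[OF IA(1) ksC])
        have "((\<lambda>s::real. p0 + s *\<^sub>R ks) \<longlongrightarrow> p0 + 0 *\<^sub>R ks) (at_right 0)"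
          by (rule tendsto_add[OF tendsto_const tendsto_scaleR[OF tendsto_ident_at tendsto_const]])
        then have "((\<lambda>s::real. p0 + s *\<^sub>R ks) \<longlongrightarrow> p0) (at_right 0)" by simp
        then have ev2: "eventually (\<lambda>s. p0 + s *\<^sub>R ks \<in> ball p0 rho) (at_right 0)"
          by (rule topological_tendstoD) (use rho(1) in auto)
        have ev3: "eventually (\<lambda>s::real. 0 < s) (at_right 0)" by (rule eventually_at_right_less)
        have "eventually (\<lambda>s. p0 + s *\<^sub>R ks \<in> C \<and> p0 + s *\<^sub>R ks \<in> ball p0 rho \<and> 0 < s) (at_right 0)"
          using eventually_conj[OF ev1 eventually_conj[OF ev2 ev3]] .
        then obtain s where s: "p0 + s *\<^sub>R ks \<in> C" "p0 + s *\<^sub>R ks \<in> ball p0 rho" "0 < s"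
          using eventually_happens[of _ "at_right (0::real)"] trivial_limit_at_right_real by blast
        have "p0 + s *\<^sub>R ks \<in> T" using s(1,2) rho(2) WC(4) by blast
        then have "(1 / s) *\<^sub>R (p0 + s *\<^sub>R ks) \<in> T" using coneT s(3) by simp
        then have t'T: "(1 / s) *\<^sub>R p0 + ks \<in> T" using s(3) by (simp add: scaleR_add_right)
        define u' where "u' = (1 / s) *\<^sub>R y0 + vs"
        have u'1: "inner g u' = -1" using gy0 vs1 by (simp add: u'_def inner_add_right)
        have "A *v u' - ((1 / s) *\<^sub>R p0 + ks) = M xm"
          by (simp add: u'_def M_def vs_def ks_def Ay0 matrix_vector_right_distrib matrix_vector_mult_scaleR)
        then have "norm (A *v u' - ((1 / s) *\<^sub>R p0 + ks)) \<le> del" using Mxm by simp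
        then show False using noatt[OF u'1 t'T] by simp
      qed
      have "A *v y0 \<in> T" using Ay0 p0T by simp
      moreover have "A *v y0 \<notin> Lsp T" using notV by (simp add: V_def)
      ultimately show ?thesis using gy0 notpoly Ay0 by blast
    qed
  qed
qed
qed

theorem proposition4p1:
  fixes f :: "real^'d \<Rightarrow> real" and gf :: "real^'d \<Rightarrow> real^'d"
    and P :: "real^'d \<Rightarrow> real^'s" and JP :: "real^'d \<Rightarrow> real^'d^'s"
    and D :: "(real^'s) set" and \<Omega> :: "(real^'d) set" and zb :: "real^'d"
  assumes f_C1: "\<And>z. (f has_derivative (\<lambda>h. inner (gf z) h)) (at z)" "continuous_on UNIV gf"
    and P_C1: "\<And>z. (P has_derivative (\<lambda>h. JP z *v h)) (at z)" "continuous_on UNIV JP"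
    and D_closed: "closed D"
    and Omega_def: "\<Omega> = {z. P z \<in> D}"
    and zb_in: "zb \<in> \<Omega>"
    and B_stat: "0 \<in> (\<lambda>v. gf zb + v) ` regular_normal_cone \<Omega> zb"
    and GGCQ: "regular_normal_cone \<Omega> zb = polar_cone (lin_tangent_cone JP P D zb)"
    and subreg: "metrically_subregular
                   (\<lambda>u. {JP zb *v u - t | t. t \<in> tangent_cone D (P zb)}) 0 0"
  shows "(\<exists>w \<in> tangent_cone D (P zb). \<exists>ws \<in> regular_normal_cone (tangent_cone D (P zb)) w.
            gf zb + transpose (JP zb) *v ws = 0)
       \<or> (\<exists>u \<in> lin_tangent_cone JP P D zb.
            JP zb *v u \<notin> Lsp (tangent_cone D (P zb)) \<and>
            inner (gf zb) u = 0 \<and>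
            0 \<in> (\<lambda>v. gf zb + v) ` regular_normal_cone (lin_tangent_cone JP P D zb) u \<and>
            \<not> locally_polyhedral (tangent_cone D (P zb)) (JP zb *v u))"
proof -
  define g where "g = gf zb"
  define A where "A = JP zb"
  define T where "T = tangent_cone D (P zb)"
  have PzbD: "P zb \<in> D" using zb_in Omega_def by simp
  have closedT: "closed T" unfolding T_def by (rule closed_tangent_cone)
  have coneT: "c *\<^sub>R x \<in> T" if "x \<in> T" "0 \<le> c" for x c
    using that unfolding T_def by (rule tangent_cone_scale)
  have T0: "0 \<in> T" unfolding T_def by (rule tangent_cone_zero[OF PzbD])
  define L where "L = lin_tangent_cone JP P D zb"
  have Leq: "u \<in> L \<longleftrightarrow> A *v u \<in> T" for u by (simp add: L_def lin_tangent_cone_def A_def T_def)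
  obtain v where v2: "0 = gf zb + v" and v1: "v \<in> regular_normal_cone \<Omega> zb" using B_stat by (rule imageE)
  have "v = - g" using v2 by (simp add: g_def eq_neg_iff_add_eq_0 add.commute)
  then have mg: "- g \<in> polar_cone L" using v1 GGCQ by (simp add: L_def)
  have gpos: "0 \<le> inner g u" if "A *v u \<in> T" for u
  proof -
    have "u \<in> L" using that Leq by simp
    then have "inner (- g) u \<le> 0" using mg unfolding polar_cone_def by blast
    then show ?thesis by simp
  qed
  have "(\<exists>w\<in>T. \<exists>ws\<in>polar_cone (tangent_cone T w). g + transpose A *v ws = 0) \<or>
         (\<exists>u. A *v u \<in> T \<and> A *v u \<notin> Lsp T \<and> inner g u = 0 \<and> \<not> locally_polyhedral T (A *v u))"
    by (rule core[OF closedT coneT T0 gpos])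
  then show ?thesis
  proof
    assume "\<exists>w\<in>T. \<exists>ws\<in>polar_cone (tangent_cone T w). g + transpose A *v ws = 0"
    then obtain w ws where w: "w \<in> T" "ws \<in> polar_cone (tangent_cone T w)" "g + transpose A *v ws = 0" by blast
    have "ws \<in> regular_normal_cone T w" using w(1,2) by (simp add: regular_normal_cone_def)
    then show ?thesis using w(1,3) unfolding T_def g_def A_def by blast
  next
    assume "\<exists>u. A *v u \<in> T \<and> A *v u \<notin> Lsp T \<and> inner g u = 0 \<and> \<not> locally_polyhedral T (A *v u)"
    then obtain u where u: "A *v u \<in> T" "A *v u \<notin> Lsp T" "inner g u = 0" "\<not> locally_polyhedral T (A *v u)" by blast
    have uL: "u \<in> L" using u(1) Leq by simp
    have "- g \<in> polar_cone (tangent_cone L u)"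
    proof (rule min_polar[OF uL])
      fix y assume "y \<in> L"
      then have "0 \<le> inner g y" using Leq gpos by blast
      then show "inner g u \<le> inner g y" using u(3) by simp
    qed
    then have "- g \<in> regular_normal_cone L u" using uL by (simp add: regular_normal_cone_def)
    then have "0 \<in> (\<lambda>v. g + v) ` regular_normal_cone L u" by (rule rev_image_eqI) simp
    moreover have "u \<in> lin_tangent_cone JP P D zb" using uL by (simp add: L_def)
    ultimately show ?thesis using u(2,3,4) unfolding T_def g_def A_def L_def by blast
  qed
qed

end
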